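(* Let $n\geq2$ and $1\le k\le n$. Let $\mathcal M_n^{k,k-1}$ (resp. $\mathcal M_n^{k,k+1}$) be the set of monotone permutations $\pi\in S_n$ with $\pi(1)=k$ and $\pi(2)=k-1$ (resp. $\pi(2)=k+1$). For $\pi\in\mathcal M_n^{k,k-1}$ (resp. $\pi\in\mathcal M_n^{k,k+1}$) define $\bar\pi\in S_{n-1}$ by $\bar\pi(1)=k-1$ (resp. $\bar\pi(1)=k$) and, for $i=2,\dots,n-1$, $\bar\pi(i)=\pi(i+1)$ if $\pi(i+1)<k$ and $\bar\pi(i)=\pi(i+1)-1$ if $\pi(i+1)>k$. Then $\pi\mapsto\bar\pi$ is a bijection $\mathcal M_n^{k,k-1}\to\mathcal M_{n-1}^{k-1}$ (resp. $\mathcal M_n^{k,k+1}\to\mathcal M_{n-1}^{k}$), and $(-1)^{\operatorname{dr}(\bar\pi)}=(-1)^{\operatorname{dr}(\pi)+k}$ (resp. $(-1)^{\operatorname{dr}(\bar\pi)}=(-1)^{\operatorname{dr}(\pi)+k-1}$).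
   Context: A permutation $\pi\in S_n$ is monotone if, for each $i=1,\dots,n$, either $\pi(j)<\pi(i)$ for all $j<i$, or $\pi(j)>\pi(i)$ for all $j<i$; in the second case $i$ is called a drop of $\pi$ (by convention $i=1$ satisfies the first condition vacuously and is not a drop). $\mathcal M_n^k$ denotes the set of monotone permutations with $\pi(1)=k$, and $\operatorname{dr}(\pi)$ the sum of all drops of $\pi$. *)

theory Defs
  imports "HOL-Combinatorics.Permutations"
begin

text \<open>Permutations in S_n are functions nat => nat permuting {1..n} (identity outside).\<close>

definition monotone_perm :: "nat \<Rightarrow> (nat \<Rightarrow> nat) \<Rightarrow> bool" where
  "monotone_perm n p \<longleftrightarrow> p permutes {1..n} \<and>
     (\<forall>i\<in>{1..n}. (\<forall>j\<in>{1..<i}. p j < p i) \<or> (\<forall>j\<in>{1..<i}. p j > p i))"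

text \<open>Drops: i >= 2 with p j > p i for all j < i (i = 1 is never a drop).\<close>
definition drops :: "nat \<Rightarrow> (nat \<Rightarrow> nat) \<Rightarrow> nat set" where
  "drops n p = {i\<in>{2..n}. \<forall>j\<in>{1..<i}. p j > p i}"

definition dr :: "nat \<Rightarrow> (nat \<Rightarrow> nat) \<Rightarrow> nat" where
  "dr n p = \<Sum>(drops n p)"

definition Mon :: "nat \<Rightarrow> nat \<Rightarrow> (nat \<Rightarrow> nat) set" where
  "Mon n k = {p. monotone_perm n p \<and> p 1 = k}"

definition Mon2 :: "nat \<Rightarrow> nat \<Rightarrow> nat \<Rightarrow> (nat \<Rightarrow> nat) set" where
  "Mon2 n k l = {p. monotone_perm n p \<and> p 1 = k \<and> p 2 = l}"

text \<open>The map pi |-> bar pi in S_{n-1}, with prescribed first value a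
  (a = k-1 in the first case, a = k in the second); identity outside {1..n-1}.\<close>
definition bar :: "nat \<Rightarrow> nat \<Rightarrow> nat \<Rightarrow> (nat \<Rightarrow> nat) \<Rightarrow> (nat \<Rightarrow> nat)" where
  "bar n k a p = (\<lambda>i. if i = 1 then a
      else if i \<in> {2..n-1} then (if p (i+1) < k then p (i+1) else p (i+1) - 1)
      else i)"

end

theory Submission
  imports Defs
begin

definition fdn :: "nat \<Rightarrow> nat \<Rightarrow> nat" where
  "fdn k v = (if v < k then v else v - 1)"
definition gup :: "nat \<Rightarrow> nat \<Rightarrow> nat" where
  "gup k v = (if v < k then v else v + 1)"
definition Dl :: "nat \<Rightarrow> nat \<Rightarrow> (nat \<Rightarrow> nat) \<Rightarrow> nat \<Rightarrow> nat" where
  "Dl n k p = (\<lambda>i. if i \<in> {1..n-1} then fdn k (p (i+1)) else i)"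
definition Ins :: "nat \<Rightarrow> nat \<Rightarrow> (nat \<Rightarrow> nat) \<Rightarrow> nat \<Rightarrow> nat" where
  "Ins n k s = (\<lambda>i. if i = 1 then k else if i \<in> {2..n} then gup k (s (i-1)) else i)"

lemma fdn_less: "a \<noteq> k \<Longrightarrow> b \<noteq> k \<Longrightarrow> (fdn k a < fdn k b) = (a < b)"
  unfolding fdn_def by auto
lemma gup_less: "(gup k a < gup k b) = (a < b)"
  unfolding gup_def by auto
lemma gup_ne: "gup k a \<noteq> k"
  unfolding gup_def by auto
lemma fdn_gup: "fdn k (gup k a) = a"
  unfolding gup_def fdn_def by auto
lemma gup_fdn: "a \<noteq> k \<Longrightarrow> gup k (fdn k a) = a"
  unfolding gup_def fdn_def by auto

lemma perm_ne1:
  assumes "p permutes S" "i \<noteq> 1" shows "p i \<noteq> p 1"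
  using permutes_inj[OF assms(1)] assms(2) by (metis injD)

lemma D_permutes:
  assumes "p permutes {1..n}" "p 1 = k" "n \<ge> 1"
  shows "Dl n k p permutes {1..n-1}"
proof -
  have ne: "p (i+1) \<noteq> k" if "i \<ge> 1" for i using perm_ne1[OF assms(1), of "i+1"] assms(2) that by auto
  have k: "k \<in> {1..n}" using permutes_in_image[OF assms(1), of 1] assms(2,3) by auto
  have rng: "p (i+1) \<in> {1..n}" if "i \<in> {1..n-1}" for i
  proof -
    have "i+1 \<in> {1..n}" using that by auto
    then show ?thesis using permutes_in_image[OF assms(1)] by blast
  qed
  have inj: "inj_on (Dl n k p) {1..n-1}"
  proof (rule inj_onI)
    fix i j assume i: "i \<in> {1..n-1}" and j: "j\<in>{1..n-1}" and e: "Dl n k p i = Dl n k p j"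
    have "fdn k (p (i+1)) = fdn k (p (j+1))" using e i j by (simp add: Dl_def)
    moreover have "p (i+1) \<noteq> k" "p (j+1) \<noteq> k" using ne i j by auto
    ultimately have "p (i+1) = p (j+1)" unfolding fdn_def by (auto split: if_splits)
    then show "i = j" using permutes_inj[OF assms(1)] by (simp add: inj_eq)
  qed
  have img: "Dl n k p ` {1..n-1} \<subseteq> {1..n-1}"
  proof
    fix x assume "x \<in> Dl n k p ` {1..n-1}"
    then obtain i where i: "i \<in> {1..n-1}" and x: "x = fdn k (p (i+1))" by (auto simp: Dl_def)
    have "p (i+1) \<noteq> k" using ne i by auto
    then show "x \<in> {1..n-1}" using rng[OF i] k unfolding x fdn_def by auto
  qed
  have "bij_betw (Dl n k p) {1..n-1} {1..n-1}"
    using endo_inj_surj[OF _ img inj] inj by (simp add: bij_betw_def)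
  then show ?thesis by (rule bij_imp_permutes) (auto simp: Dl_def)
qed

lemma Ins_permutes:
  assumes "s permutes {1..n-1}" "1 \<le> k" "k \<le> n" "n \<ge> 1"
  shows "Ins n k s permutes {1..n}"
proof -
  have rng: "s (i-1) \<in> {1..n-1}" if "i \<in> {2..n}" for i
  proof -
    have "i-1 \<in> {1..n-1}" using that by auto
    then show ?thesis using permutes_in_image[OF assms(1)] by blast
  qed
  have inj: "inj_on (Ins n k s) {1..n}"
  proof (rule inj_onI)
    fix i j assume i: "i \<in> {1..n}" and j: "j\<in>{1..n}" and e: "Ins n k s i = Ins n k s j"
    show "i = j"
    proof (cases "i = 1 \<or> j = 1")
      case True then show ?thesis using e i j gup_ne[of k] gup_ne[of k, symmetric] by (auto simp: Ins_def split: if_splits)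
    next
      case False
      then have "gup k (s (i-1)) = gup k (s (j-1))" using e i j by (simp add: Ins_def)
      then have "s (i-1) = s (j-1)" by (metis fdn_gup)
      then have "i - 1 = j - 1" using permutes_inj[OF assms(1)] by (simp add: inj_eq)
      then show ?thesis using False i j by auto
    qed
  qed
  have img: "Ins n k s ` {1..n} \<subseteq> {1..n}"
  proof
    fix x assume "x \<in> Ins n k s ` {1..n}"
    then obtain i where i: "i \<in> {1..n}" and x: "x = Ins n k s i" by auto
    show "x \<in> {1..n}"
    proof (cases "i = 1")
      case True then show ?thesis using x assms by (simp add: Ins_def)
    next
      case False
      then have "i \<in> {2..n}" using i by auto
      then show ?thesis using rng[of i] x False unfolding Ins_def gup_def by auto
    qed
  qed
  have "bij_betw (Ins n k s) {1..n} {1..n}"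
    using endo_inj_surj[OF _ img inj] inj by (simp add: bij_betw_def)
  then show ?thesis by (rule bij_imp_permutes) (use assms(4) in \<open>auto simp: Ins_def\<close>)
qed

lemma D_mono:
  assumes "monotone_perm n p" "p 1 = k" "n \<ge> 1"
  shows "monotone_perm (n-1) (Dl n k p)"
proof -
  have pp: "p permutes {1..n}" using assms(1) by (simp add: monotone_perm_def)
  have ne: "p (i+1) \<noteq> k" if "i \<ge> 1" for i using perm_ne1[OF pp, of "i+1"] assms(2) that by auto
  have "(\<forall>j\<in>{1..<i}. Dl n k p j < Dl n k p i) \<or> (\<forall>j\<in>{1..<i}. Dl n k p j > Dl n k p i)"
    if i: "i \<in> {1..n-1}" for i
  proof -
    have "i + 1 \<in> {1..n}" using i by auto
    then have "(\<forall>j\<in>{1..<i+1}. p j < p (i+1)) \<or> (\<forall>j\<in>{1..<i+1}. p j > p (i+1))"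
      using assms(1) unfolding monotone_perm_def by blast
    then have "(\<forall>j\<in>{1..<i}. p (j+1) < p (i+1)) \<or> (\<forall>j\<in>{1..<i}. p (j+1) > p (i+1))"
      by auto
    moreover have "Dl n k p j = fdn k (p (j+1))" if "j \<in> {1..<i}" for j
      using that i by (simp add: Dl_def)
    moreover have "Dl n k p i = fdn k (p (i+1))" using i by (simp add: Dl_def)
    moreover have "p (j+1) \<noteq> k" if "j \<in> {1..<i}" for j using ne that by auto
    moreover have "p (i+1) \<noteq> k" using ne i by auto
    ultimately show ?thesis using fdn_less by (smt (verit, best))
  qed
  then show ?thesis using D_permutes[OF pp assms(2,3)] by (simp add: monotone_perm_def)
qed

lemma Ins_mono:
  assumes "monotone_perm (n-1) s" "1 \<le> k" "k \<le> n" "n \<ge> 1" "s 1 \<le> k" "k \<le> s 1 + 1"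
  shows "monotone_perm n (Ins n k s)"
proof -
  have sp: "s permutes {1..n-1}" using assms(1) by (simp add: monotone_perm_def)
  have "(\<forall>j\<in>{1..<i}. Ins n k s j < Ins n k s i) \<or> (\<forall>j\<in>{1..<i}. Ins n k s j > Ins n k s i)"
    if i: "i \<in> {1..n}" for i
  proof (cases "i = 1")
    case True then show ?thesis by auto
  next
    case False
    then have i2: "i \<in> {2..n}" using i by auto
    have vi: "Ins n k s i = gup k (s (i-1))" using i2 by (simp add: Ins_def)
    have vj: "Ins n k s j = gup k (s (j-1))" if "j \<in> {2..<i}" for j
      using that i2 by (simp add: Ins_def)
    have v1: "Ins n k s 1 = k" by (simp add: Ins_def)
    have mono: "(\<forall>j\<in>{1..<i-1}. s j < s (i-1)) \<or> (\<forall>j\<in>{1..<i-1}. s j > s (i-1))"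
      using assms(1) i2 unfolding monotone_perm_def by auto
    show ?thesis
    proof (cases "k < gup k (s (i-1))")
      case True
      then have ge: "s (i-1) \<ge> k" unfolding gup_def by (auto split: if_splits)
      have "\<forall>j\<in>{1..<i}. Ins n k s j < Ins n k s i"
      proof
        fix j assume j: "j \<in> {1..<i}"
        show "Ins n k s j < Ins n k s i"
        proof (cases "j = 1")
          case True then show ?thesis using v1 vi \<open>k < gup k (s (i-1))\<close> by simp
        next
          case False
          then have j2: "j \<in> {2..<i}" using j by auto
          then have "1 \<in> {1..<i-1}" "j - 1 \<in> {1..<i-1}" by auto
          then have "s (j-1) < s (i-1)" using mono ge assms(5) by fastforce
          then show ?thesis using vj[OF j2] vi gup_less by simp
        qed
      qed
      then show ?thesis by blast
    next
      case False
      then have lt: "gup k (s (i-1)) < k" using gup_ne[of k "s (i-1)"] by linarith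
      then have ge: "s (i-1) < k" unfolding gup_def by (auto split: if_splits)
      have "\<forall>j\<in>{1..<i}. Ins n k s j > Ins n k s i"
      proof
        fix j assume j: "j \<in> {1..<i}"
        show "Ins n k s j > Ins n k s i"
        proof (cases "j = 1")
          case True then show ?thesis using v1 vi lt by simp
        next
          case False
          then have j2: "j \<in> {2..<i}" using j by auto
          then have "1 \<in> {1..<i-1}" "j - 1 \<in> {1..<i-1}" by auto
          then have "s (j-1) > s (i-1)" using mono ge assms(6) by fastforce
          then show ?thesis using vj[OF j2] vi gup_less by simp
        qed
      qed
      then show ?thesis by blast
    qed
  qed
  then show ?thesis using Ins_permutes[OF sp assms(2,3,4)] by (simp add: monotone_perm_def)
qed

lemma drops_char:
  assumes "monotone_perm n p"
  shows "drops n p = {i\<in>{1..n}. p i < p 1}"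
proof -
  have eq: "(\<forall>j\<in>{1..<i}. p j > p i) = (p i < p 1)" if "i \<in> {2..n}" for i
  proof
    assume "\<forall>j\<in>{1..<i}. p j > p i" then show "p i < p 1" using that by auto
  next
    assume a: "p i < p 1"
    have "(\<forall>j\<in>{1..<i}. p j < p i) \<or> (\<forall>j\<in>{1..<i}. p j > p i)"
      using assms that unfolding monotone_perm_def by auto
    moreover have "1 \<in> {1..<i}" using that by auto
    ultimately show "\<forall>j\<in>{1..<i}. p j > p i" using a by (meson order.asym)
  qed
  show ?thesis unfolding drops_def
  proof (rule set_eqI)
    fix i show "i \<in> {i\<in>{2..n}. \<forall>j\<in>{1..<i}. p j > p i} \<longleftrightarrow> i \<in> {i\<in>{1..n}. p i < p 1}"
    proof (cases "i \<in> {2..n}")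
      case True then show ?thesis using eq[OF True] by auto
    next
      case False
      then have "i \<in> {1..n} \<Longrightarrow> i = 1" by auto
      then show ?thesis using False by auto
    qed
  qed
qed

lemma card_drops:
  assumes "monotone_perm n p" "p 1 \<in> {1..n}"
  shows "card (drops n p) = p 1 - 1"
proof -
  have pp: "p permutes {1..n}" using assms(1) by (simp add: monotone_perm_def)
  have "p ` {i\<in>{1..n}. p i < p 1} = {v\<in>p ` {1..n}. v < p 1}" by blast
  also have "\<dots> = {1..<p 1}" unfolding permutes_image[OF pp] using assms(2) by auto
  finally have im: "p ` {i\<in>{1..n}. p i < p 1} = {1..<p 1}" .
  have "inj_on p {i\<in>{1..n}. p i < p 1}"
    using inj_on_subset[OF permutes_inj[OF pp] subset_UNIV] .
  then have "bij_betw p {i\<in>{1..n}. p i < p 1} {1..<p 1}" using im by (simp add: bij_betw_def)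
  then have "card {i\<in>{1..n}. p i < p 1} = card {1..<p 1}" by (rule bij_betw_same_card)
  then show ?thesis using drops_char[OF assms(1)] by simp
qed

lemma sum_Suc_img: "finite D \<Longrightarrow> \<Sum>(Suc ` D) = \<Sum>D + card (D::nat set)"
  by (simp add: sum.reindex, induct D rule: finite_induct, auto)

lemma main_gen:
  assumes n2: "n \<ge> 2" and k1: "1 \<le> k" and kn: "k \<le> n" and lk: "l \<noteq> k"
    and a: "a = fdn k l" and ak: "a \<le> k" "k \<le> a + 1"
  shows "bij_betw (bar n k a) (Mon2 n k l) (Mon (n-1) a)
    \<and> (\<forall>p\<in>Mon2 n k l. dr n p = dr (n-1) (bar n k a p) + (a - 1) + (if l < k then 2 else 0))"
proof -
  have barD: "bar n k a p = Dl n k p" if "p \<in> Mon2 n k l" for p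
  proof
    fix i show "bar n k a p i = Dl n k p i"
      using that n2 a unfolding bar_def Dl_def Mon2_def fdn_def by (auto simp: numeral_2_eq_2)
  qed
  have left: "Ins n k (Dl n k p) = p" if p: "p \<in> Mon2 n k l" for p
  proof
    fix i
    have pp: "p permutes {1..n}" and p1: "p 1 = k" using p by (auto simp: Mon2_def monotone_perm_def)
    show "Ins n k (Dl n k p) i = p i"
    proof (cases "i \<in> {2..n}")
      case True
      then have "p i \<noteq> k" using perm_ne1[OF pp, of i] p1 by auto
      moreover have "Dl n k p (i-1) = fdn k (p i)" using True by (auto simp: Dl_def)
      ultimately show ?thesis using True gup_fdn by (simp add: Ins_def)
    next
      case False
      then show ?thesis using p1 permutes_not_in[OF pp, of i] by (auto simp: Ins_def)
    qed
  qed
  have right: "Dl n k (Ins n k s) = s" if s: "s \<in> Mon (n-1) a" for s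
  proof
    fix i
    have sp: "s permutes {1..n-1}" using s by (auto simp: Mon_def monotone_perm_def)
    show "Dl n k (Ins n k s) i = s i"
    proof (cases "i \<in> {1..n-1}")
      case True
      moreover have "Ins n k s (i+1) = gup k (s i)" using True by (auto simp: Ins_def)
      ultimately show ?thesis by (simp add: Dl_def fdn_gup)
    next
      case False
      then show ?thesis using permutes_not_in[OF sp, of i] by (auto simp: Dl_def)
    qed
  qed
  have img1: "Dl n k ` Mon2 n k l \<subseteq> Mon (n-1) a"
  proof
    fix q assume "q \<in> Dl n k ` Mon2 n k l"
    then obtain p where p: "p \<in> Mon2 n k l" and q: "q = Dl n k p" by auto
    have "monotone_perm (n-1) q" using D_mono[of n p k] p q n2 by (auto simp: Mon2_def)
    moreover have "q 1 = a" using p q n2 a by (auto simp: Mon2_def Dl_def numeral_2_eq_2)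
    ultimately show "q \<in> Mon (n-1) a" by (simp add: Mon_def)
  qed
  have img2: "Ins n k ` Mon (n-1) a \<subseteq> Mon2 n k l"
  proof
    fix p assume "p \<in> Ins n k ` Mon (n-1) a"
    then obtain s where s: "s \<in> Mon (n-1) a" and p: "p = Ins n k s" by auto
    have "monotone_perm n p" using Ins_mono[of n s k] s p n2 k1 kn ak by (auto simp: Mon_def)
    moreover have "p 1 = k" using p by (simp add: Ins_def)
    moreover have "p 2 = l" using p s n2 a gup_fdn[OF lk] by (simp add: Ins_def Mon_def)
    ultimately show "p \<in> Mon2 n k l" by (simp add: Mon2_def)
  qed
  have bijD: "bij_betw (Dl n k) (Mon2 n k l) (Mon (n-1) a)"
    by (rule bij_betw_byWitness[OF _ _ img1 img2]) (use left right in auto)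
  have bij: "bij_betw (bar n k a) (Mon2 n k l) (Mon (n-1) a)"
    using bijD bij_betw_cong[of "Mon2 n k l" "bar n k a" "Dl n k"] barD by blast
  have drs: "dr n p = dr (n-1) (bar n k a p) + (a - 1) + (if l < k then 2 else 0)"
    if p: "p \<in> Mon2 n k l" for p
  proof -
    define q where "q = Dl n k p"
    have pm: "monotone_perm n p" and p1: "p 1 = k" and p2: "p 2 = l" using p by (auto simp: Mon2_def)
    have pp: "p permutes {1..n}" using pm by (simp add: monotone_perm_def)
    have qm: "monotone_perm (n-1) q" and q1: "q 1 = a" using img1 p q_def by (auto simp: Mon_def)
    have qp: "q permutes {1..n-1}" using qm by (simp add: monotone_perm_def)
    have a1: "a \<in> {1..n-1}" using q1 permutes_in_image[OF qp, of 1] n2 by auto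
    have Dp: "drops n p = {i\<in>{1..n}. p i < k}" using drops_char[OF pm] p1 by simp
    have Dq: "drops (n-1) q = {i\<in>{1..n-1}. q i < a}" using drops_char[OF qm] q1 by simp
    have lk2: "l = k - 1 \<or> l = k + 1" using a ak lk unfolding fdn_def by (auto split: if_splits)
    have key: "drops n p = (if l < k then {2} else {}) \<union> Suc ` drops (n-1) q"
    proof (rule set_eqI)
      fix x
      show "x \<in> drops n p \<longleftrightarrow> x \<in> (if l < k then {2} else {}) \<union> Suc ` drops (n-1) q"
      proof (cases "x \<in> {3..n}")
        case True
        have e1: "x \<in> Suc ` drops (n-1) q \<longleftrightarrow> fdn k (p x) < a"
        proof
          assume "x \<in> Suc ` drops (n-1) q"
          then obtain i where "i \<in> {1..n-1}" "q i < a" "x = Suc i" using Dq by auto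
          then show "fdn k (p x) < a" by (simp add: q_def Dl_def)
        next
          assume h: "fdn k (p x) < a"
          have "x - 1 \<in> {1..n-1}" "Suc (x - 1) = x" using True by auto
          moreover have "q (x-1) = fdn k (p (x - 1 + 1))" unfolding q_def Dl_def
            using \<open>x - 1 \<in> {1..n-1}\<close> by (subst if_P) auto
          moreover have "x - 1 + 1 = x" using True by auto
          ultimately have "q (x-1) < a" "x - 1 \<in> {1..n-1}" "Suc (x - 1) = x" using h by auto
          then have "x - 1 \<in> drops (n-1) q" using Dq by auto
          then show "x \<in> Suc ` drops (n-1) q" using \<open>Suc (x - 1) = x\<close> by (metis image_eqI)
        qed
        have nk: "p x \<noteq> k" using perm_ne1[OF pp, of x] p1 True by auto
        have x2: "x \<noteq> 2" using True by auto
        have nl: "p x \<noteq> l" using permutes_inj[OF pp] p2 x2 by (metis injD)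
        have "fdn k (p x) < a \<longleftrightarrow> p x < l" using fdn_less[OF nk lk] a by simp
        also have "\<dots> \<longleftrightarrow> p x < k" using lk2 nk nl by auto
        finally show ?thesis using e1 Dp True by auto
      next
        case False
        have notin: "x \<notin> Suc ` drops (n-1) q" if "x \<noteq> 2"
        proof
          assume "x \<in> Suc ` drops (n-1) q"
          then obtain i where "i \<in> {1..n-1}" "x = Suc i" using Dq by auto
          then show False using False that by auto
        qed
        have n2in: "2 \<notin> Suc ` drops (n-1) q"
        proof
          assume "2 \<in> Suc ` drops (n-1) q"
          then have "1 \<in> drops (n-1) q" by auto
          then show False using Dq q1 by auto
        qed
        show ?thesis
        proof (cases "x = 2")
          case True then show ?thesis using n2in Dp p2 n2 by auto
        next
          case F2: False
          have "x \<notin> drops n p"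
          proof
            assume "x \<in> drops n p"
            then have "x \<in> {1..n}" "p x < k" using Dp by auto
            then show False using False F2 p1 by (cases "x = 1") auto
          qed
          then show ?thesis using notin[OF F2] F2 by auto
        qed
      qed
    qed
    have fin: "finite (drops (n-1) q)" using Dq by simp
    have n1: "1 \<notin> drops (n-1) q" using Dq q1 by auto
    have n2in: "2 \<notin> Suc ` drops (n-1) q" using n1 by auto
    have cq: "card (drops (n-1) q) = a - 1" using card_drops[OF qm] q1 a1 by simp
    have "dr n p = (if l < k then 2 else 0) + \<Sum>(Suc ` drops (n-1) q)"
      unfolding dr_def key using n2in fin by auto
    also have "\<dots> = dr (n-1) q + (a - 1) + (if l < k then 2 else 0)"
      using sum_Suc_img[OF fin] cq by (simp add: dr_def)
    finally show ?thesis using barD[OF p] q_def by simp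
  qed
  show ?thesis using bij drs by blast
qed

theorem lemma2p6:
  fixes n k :: nat
  assumes "n \<ge> 2" and "1 \<le> k" and "k \<le> n"
  shows "bij_betw (bar n k (k - 1)) (Mon2 n k (k - 1)) (Mon (n - 1) (k - 1))
       \<and> (\<forall>p\<in>Mon2 n k (k - 1).
            (-1::int) ^ dr (n - 1) (bar n k (k - 1) p) = (-1) ^ (dr n p + k))
       \<and> bij_betw (bar n k k) (Mon2 n k (k + 1)) (Mon (n - 1) k)
       \<and> (\<forall>p\<in>Mon2 n k (k + 1).
            (-1::int) ^ dr (n - 1) (bar n k k p) = (-1) ^ (dr n p + k - 1))"
proof -
  have A: "bij_betw (bar n k (k-1)) (Mon2 n k (k-1)) (Mon (n-1) (k-1))
    \<and> (\<forall>p\<in>Mon2 n k (k-1). dr n p = dr (n-1) (bar n k (k-1) p) + (k - 1 - 1) + (if k - 1 < k then 2 else 0))"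
    by (rule main_gen) (use assms in \<open>auto simp: fdn_def\<close>)
  have B: "bij_betw (bar n k k) (Mon2 n k (k+1)) (Mon (n-1) k)
    \<and> (\<forall>p\<in>Mon2 n k (k+1). dr n p = dr (n-1) (bar n k k p) + (k - 1) + (if k + 1 < k then 2 else 0))"
    by (rule main_gen) (use assms in \<open>auto simp: fdn_def\<close>)
  have A2: "(-1::int) ^ dr (n - 1) (bar n k (k - 1) p) = (-1) ^ (dr n p + k)"
    if p: "p \<in> Mon2 n k (k-1)" for p
  proof -
    have "p permutes {1..n}" "p 2 = k - 1" using p by (auto simp: Mon2_def monotone_perm_def)
    then have "k - 1 \<in> {1..n}" using permutes_in_image[of p "{1..n}" 2] assms by auto
    then have "k \<ge> 2" by auto
    then have "dr n p + k = dr (n - 1) (bar n k (k - 1) p) + 2 * k" using A p assms by auto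
    then show ?thesis by (simp add: power_add power_mult)
  qed
  have B2: "(-1::int) ^ dr (n - 1) (bar n k k p) = (-1) ^ (dr n p + k - 1)"
    if p: "p \<in> Mon2 n k (k+1)" for p
  proof -
    have "dr n p + k - 1 = dr (n - 1) (bar n k k p) + 2 * (k - 1)" using B p assms by auto
    then show ?thesis by (simp add: power_add power_mult)
  qed
  show ?thesis using A B A2 B2 by blast
qed

end
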